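(* Let $S$ be a nonempty set of graphs on $\Pi$, $A$ the closed-above model generated by $S$, and $r>0$. Then for every integer $i$ with $1\le i<\mathrm{eqdom}(S^r)$, $(i+(n-\mathrm{cov}_i(S^r)))$-set agreement is solvable in $r$ rounds on $A$.
   Context: Fix $\Pi=\{p_1,\dots,p_n\}$. A graph is a directed graph on $\Pi$ containing all self-loops; $Out_G(p)=\{q:(p,q)\in E(G)\}$, $In_G(p)=\{q:(q,p)\in E(G)\}$, $Out_G(P)=\bigcup_{p\in P}Out_G(p)$. Computation proceeds in failure-free, communication-closed rounds: in round $r$ a graph $G_r$ is chosen and each $p$ receives the round-$r$ messages of the processes in $In_{G_r}(p)$. $\uparrow G=\{H:E(H)\supseteq E(G)\}$; the closed-above model generated by $S$ allows exactly the executions whose round graphs each lie in $\bigcup_{G\in S}\uparrow G$. In $k$-set agreement each process starts with an input from a totally ordered set $V_{in}$ and must decide a value so that every decided value is some process's input and at most $k$ distinct values are decided; it is solvable in $r$ rounds if some algorithm guarantees this, with all processes deciding after $r$ rounds, in every allowed execution and input assignment. $\mathrm{eqdom}(G)=\min\{i\in[1,n]:\forall P\subseteq\Pi,\ |P|=i\Rightarrow Out_G(P)=\Pi\}$, $\mathrm{eqdom}(S)=\max_{G\in S}\mathrm{eqdom}(G)$, $\mathrm{cov}_i(G)=\min_{P\subseteq\Pi,|P|=i}|Out_G(P)|$, $\mathrm{cov}_i(S)=\min_{G\in S}\mathrm{cov}_i(G)$. The graph path product $G\otimes H$ has edge set $\{(u,v):\exists w,\ (u,w)\in E(G)\wedge(w,v)\in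 E(H)\}$, and $S^r=\{G_1\otimes\cdots\otimes G_r: G_1,\dots,G_r\in S\}$. *)

theory Defs
  imports Main
begin

(* Processes: elements of a finite type 'p, so Pi = UNIV and n = card (UNIV :: 'p set).
   A graph is an edge relation on 'p containing all self-loops. *)

definition graphs :: "('p \<times> 'p) set set" where
  "graphs = {E. \<forall>p. (p, p) \<in> E}"

definition Out :: "('p \<times> 'p) set \<Rightarrow> 'p \<Rightarrow> 'p set" where
  "Out G p = {q. (p, q) \<in> G}"

definition In :: "('p \<times> 'p) set \<Rightarrow> 'p \<Rightarrow> 'p set" where
  "In G p = {q. (q, p) \<in> G}"

definition OutS :: "('p \<times> 'p) set \<Rightarrow> 'p set \<Rightarrow> 'p set" where
  "OutS G P = (\<Union>p\<in>P. Out G p)"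

definition eqdom :: "('p::finite \<times> 'p) set \<Rightarrow> nat" where
  "eqdom G = Min {i. 1 \<le> i \<and> i \<le> card (UNIV :: 'p set) \<and>
                    (\<forall>P::'p set. card P = i \<longrightarrow> OutS G P = UNIV)}"

definition eqdom_set :: "('p::finite \<times> 'p) set set \<Rightarrow> nat" where
  "eqdom_set S = Max (eqdom ` S)"

definition cov :: "nat \<Rightarrow> ('p::finite \<times> 'p) set \<Rightarrow> nat" where
  "cov i G = Min {card (OutS G P) | P::'p set. card P = i}"

definition cov_set :: "nat \<Rightarrow> ('p::finite \<times> 'p) set set \<Rightarrow> nat" where
  "cov_set i S = Min (cov i ` S)"

definition gprod :: "('p \<times> 'p) set \<Rightarrow> ('p \<times> 'p) set \<Rightarrow> ('p \<times> 'p) set" where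
  "gprod G H = {(u, v). \<exists>w. (u, w) \<in> G \<and> (w, v) \<in> H}"

(* S^r = { G_1 \<otimes> ... \<otimes> G_r }; spow S 0 = {Id} is only an auxiliary base case
   (the identity graph is a neutral element of \<otimes>), used only for r > 0 *)
fun spow :: "('p \<times> 'p) set set \<Rightarrow> nat \<Rightarrow> ('p \<times> 'p) set set" where
  "spow S 0 = {Id}"
| "spow S (Suc r) = {gprod G H | G H. G \<in> spow S r \<and> H \<in> S}"

definition up :: "('p \<times> 'p) set \<Rightarrow> ('p \<times> 'p) set set" where
  "up G = {H \<in> graphs. G \<subseteq> H}"

(* set of graphs allowed in each round by the closed-above model generated by S *)
definition closed_above :: "('p \<times> 'p) set set \<Rightarrow> ('p \<times> 'p) set set" where
  "closed_above S = (\<Union>G\<in>S. up G)"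

(* Local states / messages of algorithms: a rich (full-information-capable) type *)
datatype ('p, 'v) view = Init 'p 'v | Step "('p, 'v) view" "'p \<Rightarrow> ('p, 'v) view option"

(* A round-based algorithm:
   init p x        initial state of p with input x
   send t p s      message sent by p in round t (in state s)
   trn t p s M   new state of p after round t, M q = Some m iff p received m from q
   dec p s         decision of p in state s
   Execution: graph sequence Gs, round t (t >= 1) uses graph Gs t. *)
fun run :: "('p \<Rightarrow> 'v \<Rightarrow> 's) \<Rightarrow> (nat \<Rightarrow> 'p \<Rightarrow> 's \<Rightarrow> 'm)
            \<Rightarrow> (nat \<Rightarrow> 'p \<Rightarrow> 's \<Rightarrow> ('p \<Rightarrow> 'm option) \<Rightarrow> 's)
            \<Rightarrow> (nat \<Rightarrow> ('p \<times> 'p) set) \<Rightarrow> ('p \<Rightarrow> 'v) \<Rightarrow> nat \<Rightarrow> 'p \<Rightarrow> 's" where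
  "run init send trn Gs x 0 p = init p (x p)"
| "run init send trn Gs x (Suc t) p =
     trn (Suc t) p (run init send trn Gs x t p)
       (\<lambda>q. if q \<in> In (Gs (Suc t)) p
             then Some (send (Suc t) q (run init send trn Gs x t q)) else None)"

definition ksa_solvable :: "'v::linorder itself \<Rightarrow> nat \<Rightarrow> nat \<Rightarrow> ('p \<times> 'p) set set \<Rightarrow> bool" where
  "ksa_solvable _ k r A \<longleftrightarrow>
     (\<exists>(init :: 'p \<Rightarrow> 'v \<Rightarrow> ('p, 'v) view)
        (send :: nat \<Rightarrow> 'p \<Rightarrow> ('p, 'v) view \<Rightarrow> ('p, 'v) view)
        (trn :: nat \<Rightarrow> 'p \<Rightarrow> ('p, 'v) view \<Rightarrow> ('p \<Rightarrow> ('p, 'v) view option) \<Rightarrow> ('p, 'v) view)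
        (dec :: 'p \<Rightarrow> ('p, 'v) view \<Rightarrow> 'v).
      \<forall>(Gs :: nat \<Rightarrow> ('p \<times> 'p) set) (x :: 'p \<Rightarrow> 'v).
        (\<forall>t. Gs t \<in> A) \<longrightarrow>
        (let d = (\<lambda>p. dec p (run init send trn Gs x r p)) in
           (\<forall>p. \<exists>q. d p = x q) \<and> card (range d) \<le> k))"

end

theory Submission
  imports Defs
begin

fun vval :: "('p, 'v) view \<Rightarrow> 'v" where
  "vval (Init p v) = v"
| "vval (Step s f) = vval s"

definition trnA :: "nat \<Rightarrow> 'p::finite \<Rightarrow> ('p, 'v::linorder) view \<Rightarrow> ('p \<Rightarrow> ('p, 'v) view option) \<Rightarrow> ('p, 'v) view" where
  "trnA t p s M = Init p (Min (insert (vval s) (vval ` the ` (range M - {None}))))"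

fun Rr :: "(nat \<Rightarrow> ('p \<times> 'p) set) \<Rightarrow> nat \<Rightarrow> ('p \<times> 'p) set" where
  "Rr Gs 0 = Id"
| "Rr Gs (Suc t) = gprod (Rr Gs t) (Gs (Suc t))"

lemma inv_run:
  fixes x :: "'p::finite \<Rightarrow> 'v::linorder"
  shows "vval (run (\<lambda>p v. Init p v) (\<lambda>t p s. s) trnA Gs x t p) \<in> range x \<and>
   (\<forall>q. (q,p) \<in> Rr Gs t \<longrightarrow> vval (run (\<lambda>p v. Init p v) (\<lambda>t p s. s) trnA Gs x t p) \<le> x q)"
proof (induction t arbitrary: p)
  case 0
  then show ?case by auto
next
  case (Suc t)
  let ?r = "\<lambda>q. run (\<lambda>p v. Init p v) (\<lambda>t p s. s) trnA Gs x t q"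
  define M where "M = (\<lambda>q. if q \<in> In (Gs (Suc t)) p then Some (?r q) else None)"
  define A where "A = insert (vval (?r p)) (vval ` the ` (range M - {None}))"
  have fin: "finite A" unfolding A_def by simp
  have eq: "vval (run (\<lambda>p v. Init p v) (\<lambda>t p s. s) trnA Gs x (Suc t) p) = Min A"
    by (simp add: trnA_def A_def M_def)
  have sub: "A \<subseteq> range x"
  proof
    fix a assume "a \<in> A"
    then consider "a = vval (?r p)" | "a \<in> vval ` the ` (range M - {None})" unfolding A_def by blast
    then show "a \<in> range x"
    proof cases
      case 1 then show ?thesis using Suc.IH by blast
    next
      case 2
      then obtain q where "a = vval (the (M q))" "M q \<noteq> None" by blast
      then have "a = vval (?r q)" by (simp add: M_def split: if_splits)
      then show ?thesis using Suc.IH by blast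
    qed
  qed
  have "Min A \<in> A" using fin by (intro Min_in) (auto simp: A_def)
  moreover have "\<forall>q. (q,p) \<in> Rr Gs (Suc t) \<longrightarrow> Min A \<le> x q"
  proof (intro allI impI)
    fix q assume "(q,p) \<in> Rr Gs (Suc t)"
    then obtain w where w: "(q,w) \<in> Rr Gs t" "(w,p) \<in> Gs (Suc t)" by (auto simp: gprod_def)
    have "M w = Some (?r w)" using w(2) by (simp add: M_def In_def)
    then have "vval (?r w) \<in> A" unfolding A_def by (metis (no_types, lifting) DiffI UNIV_I image_eqI insertI2 option.sel option.simps(3) singletonD)
    then have "Min A \<le> vval (?r w)" using fin by simp
    also have "\<dots> \<le> x q" using Suc.IH w(1) by blast
    finally show "Min A \<le> x q" .
  qed
  ultimately show ?case using eq sub by auto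
qed

lemma gprod_mono: "A \<subseteq> A' \<Longrightarrow> B \<subseteq> B' \<Longrightarrow> gprod A B \<subseteq> gprod A' B'"
  by (auto simp: gprod_def)

lemma Rr_sup:
  assumes "\<forall>t. Gs t \<in> closed_above S"
  shows "\<exists>G0 \<in> spow S t. G0 \<subseteq> Rr Gs t"
proof (induction t)
  case 0 then show ?case by simp
next
  case (Suc t)
  then obtain G0 where G0: "G0 \<in> spow S t" "G0 \<subseteq> Rr Gs t" by blast
  from assms obtain H where H: "H \<in> S" "H \<subseteq> Gs (Suc t)" unfolding closed_above_def up_def by blast
  have "gprod G0 H \<in> spow S (Suc t)" using G0 H by auto
  moreover have "gprod G0 H \<subseteq> Rr Gs (Suc t)" using G0 H by (simp add: gprod_mono)
  ultimately show ?case by blast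
qed

lemma spow_graphs: "S \<subseteq> graphs \<Longrightarrow> spow S t \<subseteq> graphs"
  by (induction t) (auto simp: graphs_def gprod_def)

lemma spow_ne: "S \<noteq> {} \<Longrightarrow> spow S t \<noteq> {}"
  by (induction t) auto

lemma eqdom_le:
  assumes "G \<in> graphs"
  shows "eqdom (G :: ('p::finite \<times> 'p) set) \<le> card (UNIV :: 'p set)"
proof -
  have n1: "1 \<le> card (UNIV :: 'p set)" using finite_UNIV_card_ge_0[where 'a='p] by simp
  have "card (UNIV :: 'p set) \<in> {i. 1 \<le> i \<and> i \<le> card (UNIV :: 'p set) \<and>
                    (\<forall>P::'p set. card P = i \<longrightarrow> OutS G P = UNIV)}"
  proof -
    have "\<forall>P::'p set. card P = card (UNIV :: 'p set) \<longrightarrow> OutS G P = UNIV"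
    proof (intro allI impI)
      fix P :: "'p set" assume "card P = card (UNIV :: 'p set)"
      then have "P = UNIV" by (simp add: card_eq_UNIV_imp_eq_UNIV)
      then show "OutS G P = UNIV" using assms by (auto simp: OutS_def Out_def graphs_def)
    qed
    then show ?thesis using n1 by simp
  qed
  then show ?thesis unfolding eqdom_def by (intro Min_le) auto
qed

lemma exists_low_set:
  fixes x :: "'p::finite \<Rightarrow> 'v::linorder"
  assumes "i \<le> card (UNIV :: 'p set)"
  shows "\<exists>P. card P = i \<and> (\<forall>a\<in>P. \<forall>b. b \<notin> P \<longrightarrow> x a \<le> x b)"
proof -
  obtain xs where xs: "set xs = (UNIV :: 'p set)" "distinct xs"
    using finite_distinct_list[of "UNIV :: 'p set"] by auto
  define ys where "ys = sort_key x xs"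
  have ys: "set ys = UNIV" "distinct ys" "sorted (map x ys)" "length ys = card (UNIV :: 'p set)"
    using xs by (auto simp: ys_def distinct_card[symmetric])
  define P where "P = set (take i ys)"
  have "card P = i" using ys assms by (simp add: P_def distinct_card)
  moreover have "\<forall>a\<in>P. \<forall>b. b \<notin> P \<longrightarrow> x a \<le> x b"
  proof (intro ballI allI impI)
    fix a b assume a: "a \<in> P" and b: "b \<notin> P"
    have "b \<in> set (drop i ys)" using b ys(1) unfolding P_def
      by (metis UNIV_I UnE append_take_drop_id set_append)
    have "sorted (map x (take i ys) @ map x (drop i ys))"
      using ys(3) by (metis append_take_drop_id map_append)
    then show "x a \<le> x b" using a \<open>b \<in> set (drop i ys)\<close> unfolding P_def sorted_append by auto
  qed
  ultimately show ?thesis by blast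
qed

theorem theorem8:
  fixes S :: "('p::finite \<times> 'p) set set" and r i :: nat
  assumes "S \<noteq> {}" and "S \<subseteq> graphs" and "r > 0"
    and "1 \<le> i" and "i < eqdom_set (spow S r)"
  shows "ksa_solvable TYPE('v::linorder) (i + (card (UNIV :: 'p set) - cov_set i (spow S r))) r
           (closed_above S)"
proof -
  let ?n = "card (UNIV :: 'p set)"
  have finsp: "finite (spow S r)" by simp
  have nesp: "spow S r \<noteq> {}" using spow_ne assms(1) by blast
  have "Max (eqdom ` spow S r) \<in> eqdom ` spow S r" using finsp nesp by (intro Max_in) auto
  then obtain G where G: "G \<in> spow S r" "eqdom G = eqdom_set (spow S r)"
    unfolding eqdom_set_def by (metis imageE)
  have "eqdom G \<le> ?n" using eqdom_le G(1) spow_graphs[OF assms(2)] by blast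
  then have iln: "i \<le> ?n" using G assms(5) by simp
  show ?thesis unfolding ksa_solvable_def
  proof (intro exI allI impI)
    fix Gs :: "nat \<Rightarrow> ('p \<times> 'p) set" and x :: "'p \<Rightarrow> 'v"
    assume ca: "\<forall>t. Gs t \<in> closed_above S"
    define d where "d = (\<lambda>p. vval (run (\<lambda>p v. Init p v) (\<lambda>t p s. s) trnA Gs x r p))"
    obtain G0 where G0: "G0 \<in> spow S r" "G0 \<subseteq> Rr Gs r" using Rr_sup[OF ca] by blast
    obtain P where P: "card P = i" "\<forall>a\<in>P. \<forall>b. b \<notin> P \<longrightarrow> x a \<le> x b"
      using exists_low_set[OF iln, of x] by blast
    define Ob where "Ob = OutS (Rr Gs r) P"
    have valid: "\<forall>p. \<exists>q. d p = x q" using inv_run[where x=x and Gs=Gs and t=r] unfolding d_def by (metis rangeE)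
    have sub: "range d \<subseteq> x ` P \<union> d ` (UNIV - Ob)"
    proof
      fix v assume "v \<in> range d"
      then obtain p where p: "v = d p" by blast
      show "v \<in> x ` P \<union> d ` (UNIV - Ob)"
      proof (cases "p \<in> Ob")
        case True
        then obtain q where q: "q \<in> P" "(q,p) \<in> Rr Gs r" by (auto simp: Ob_def OutS_def Out_def)
        have le: "d p \<le> x q" using inv_run[where x=x and Gs=Gs and t=r and p=p] q(2) unfolding d_def by blast
        obtain b where b: "d p = x b" using valid by blast
        show ?thesis
        proof (cases "b \<in> P")
          case True then show ?thesis using b p by blast
        next
          case False
          then have "x q \<le> x b" using P(2) q(1) by blast
          then have "v = x q" using le b p by simp
          then show ?thesis using q(1) by blast
        qed
      next
        case False then show ?thesis using p by blast
      qed
    qed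
    have "card (range d) \<le> card (x ` P \<union> d ` (UNIV - Ob))" by (intro card_mono[OF _ sub]) simp
    also have "\<dots> \<le> card (x ` P) + card (d ` (UNIV - Ob))" by (rule card_Un_le)
    also have "\<dots> \<le> card P + card (UNIV - Ob)" by (intro add_mono card_image_le) auto
    also have "card (UNIV - Ob) = ?n - card Ob" by (simp add: card_Diff_subset)
    finally have c1: "card (range d) \<le> i + (?n - card Ob)" using P(1) by simp
    have "cov_set i (spow S r) \<le> cov i G0" unfolding cov_set_def using G0(1) finsp by simp
    also have "cov i G0 \<le> card (OutS G0 P)" unfolding cov_def
      by (rule Min_le) (use P(1) in auto)
    also have "\<dots> \<le> card Ob" unfolding Ob_def using G0(2)
      by (intro card_mono) (auto simp: OutS_def Out_def)
    finally have "cov_set i (spow S r) \<le> card Ob" .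
    then have "card (range d) \<le> i + (?n - cov_set i (spow S r))" using c1 by linarith
    then show "let d = (\<lambda>p. vval (run (\<lambda>p v. Init p v) (\<lambda>t p s. s) trnA Gs x r p)) in
           (\<forall>p. \<exists>q. d p = x q) \<and> card (range d) \<le> i + (?n - cov_set i (spow S r))"
      using valid unfolding d_def Let_def by simp
  qed
qed

end
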